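(* Let $(H_X,H_Z)$ be a CSS code on $n$ qubits with $k$ logical qubits and $Z$-distance $d_Z$. Define the CSS code on $2n$ qubits with $X$-stabilizer matrix $H'_X=\begin{pmatrix}H_X&H_X\\0&H_Z\end{pmatrix}$ and $Z$-stabilizer matrix $H'_Z=\begin{pmatrix}H_Z&0\\H_X&H_X\end{pmatrix}$. Then $H'_X{H'_Z}^T=0$, the code encodes $2k$ logical qubits, and its $X$- and $Z$-distances are both equal to $$d'=\min\Big[d_Z,\ \min_{l\in\ker H_Z\setminus\mathrm{rs}(H_X),\ g\in\ker H_X}\big(2|l|+|g|-2|l\wedge g|\big)\Big].$$
   Context: Arithmetic over $\mathbb F_2$; $|v|$ is Hamming weight; $l\wedge g$ is the coordinatewise product; $\mathrm{rs}$ is row space and $\ker M=\{v:Mv^T=0\}$. For a CSS code $(H_X,H_Z)$: $k=n-\operatorname{rank}H_X-\operatorname{rank}H_Z$, $d_X=\min\{|v|:v\in\ker H_Z\setminus\mathrm{rs}(H_X)\}$, $d_Z=\min\{|v|:v\in\ker H_X\setminus\mathrm{rs}(H_Z)\}$. The new code corresponds to placing the code and its Hadamard-dual side by side and applying transversal CNOTs from the first to the second block. *)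

theory Defs
  imports "Jordan_Normal_Form.VS_Connect" "Jordan_Normal_Form.DL_Rank"
          "Jordan_Normal_Form.Matrix_Kernel" "HOL-Library.Z2" "HOL-Library.Extended_Nat"
begin

definition hwt :: "bit vec \<Rightarrow> nat" where
  "hwt v = card {i. i < dim_vec v \<and> v $ i \<noteq> 0}"

definition vwedge :: "bit vec \<Rightarrow> bit vec \<Rightarrow> bit vec" where
  "vwedge l g = vec (dim_vec l) (\<lambda>i. l $ i * g $ i)"

text \<open>Rank over F_2 (column rank = row rank); columns live in F_2^(dim_row H).\<close>
definition rank2 :: "bit mat \<Rightarrow> nat" where
  "rank2 H = vec_space.rank (dim_row H) (H :: bit mat)"

definition rs :: "bit mat \<Rightarrow> bit vec set" where
  "rs H = vec_space.row_space (dim_col H) (H :: bit mat)"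

definition ker :: "bit mat \<Rightarrow> bit vec set" where
  "ker H = mat_kernel H"

definition css_k :: "bit mat \<Rightarrow> bit mat \<Rightarrow> nat" where
  "css_k HX HZ = dim_col HX - rank2 HX - rank2 HZ"

text \<open>Distances as extended naturals: minimum over an empty set is infinity.\<close>
definition css_dX :: "bit mat \<Rightarrow> bit mat \<Rightarrow> enat" where
  "css_dX HX HZ = Inf ((\<lambda>v. enat (hwt v)) ` (ker HZ - rs HX))"

definition css_dZ :: "bit mat \<Rightarrow> bit mat \<Rightarrow> enat" where
  "css_dZ HX HZ = Inf ((\<lambda>v. enat (hwt v)) ` (ker HX - rs HZ))"

end

theory Submission
  imports Defs
begin



lemma bit_UNIV: "(UNIV :: bit set) = {0,1}"
  using bit.exhaust by auto

lemma bit_add_eq0: "(x::bit) + y = 0 \<longleftrightarrow> x = y"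
  by (cases x; cases y) auto

lemma bit_add_self[simp]: "(x::bit) + x = 0"
  by (cases x) auto

lemma vec_add_self: "(v :: bit vec) \<in> carrier_vec n \<Longrightarrow> v + v = 0\<^sub>v n"
  by (intro eq_vecI) auto

lemma card_span_bit:
  fixes S :: "bit vec set"
  assumes finS: "finite S" and carS: "S \<subseteq> carrier_vec m"
    and liS: "\<not> LinearCombinations.module.lin_dep class_ring (module_vec TYPE(bit) m) S"
  shows "card (LinearCombinations.module.span class_ring (module_vec TYPE(bit) m) S) = 2 ^ card S"
proof -
  interpret vec_space "TYPE(bit)" m .
  have sp: "span S = (\<lambda>a. lincomb a S) ` (S \<rightarrow>\<^sub>E UNIV)"
  proof
    show "span S \<subseteq> (\<lambda>a. lincomb a S) ` (S \<rightarrow>\<^sub>E UNIV)"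
    proof
      fix v assume "v \<in> span S"
      then obtain a where v: "v = lincomb a S" using LinearCombinations.module.finite_span[OF vec_module finS] carS by auto
      have "lincomb (restrict a S) S = lincomb a S"
        by (rule lincomb_cong, insert carS, auto)
      then show "v \<in> (\<lambda>a. lincomb a S) ` (S \<rightarrow>\<^sub>E UNIV)" using v
        by (intro image_eqI[of _ _ "restrict a S"]) auto
    qed
    show "(\<lambda>a. lincomb a S) ` (S \<rightarrow>\<^sub>E UNIV) \<subseteq> span S"
      using LinearCombinations.module.finite_span[OF vec_module finS] carS by auto
  qed
  have inj: "inj_on (\<lambda>a. lincomb a S) (S \<rightarrow>\<^sub>E UNIV)"
  proof
    fix a b assume a: "a \<in> S \<rightarrow>\<^sub>E UNIV" and b: "b \<in> S \<rightarrow>\<^sub>E UNIV"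
      and eq: "lincomb a S = lincomb b S"
    have "lincomb (\<lambda>v. a v + b v) S = lincomb a S + lincomb b S"
      using lincomb_sum[OF finS carS] by auto
    also have "\<dots> = 0\<^sub>v m" using eq lincomb_closed[OF carS] vec_add_self by auto
    finally have z: "lincomb (\<lambda>v. a v + b v) S = 0\<^sub>v m" .
    have "\<forall>v\<in>S. a v + b v = 0"
    proof (rule ccontr)
      assume "\<not> (\<forall>v\<in>S. a v + b v = 0)"
      then obtain v where "v \<in> S" "a v + b v \<noteq> 0" by auto
      then have "lin_dep S" using z finS by (intro lin_dep_crit[where A=S and S=S and v=v and a="\<lambda>v. a v + b v"]) auto
      then show False using liS by simp
    qed
    then have "\<forall>v\<in>S. a v = b v" using bit_add_eq0 by blast
    then show "a = b" using a b by (intro extensionalityI[of _ S]) (auto simp: PiE_def)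
  qed
  have "card (span S) = card (S \<rightarrow>\<^sub>E (UNIV :: bit set))"
    unfolding sp by (rule card_image[OF inj])
  also have "\<dots> = 2 ^ card S" using finS by (simp add: card_PiE bit_UNIV numeral_2_eq_2)
  finally show ?thesis .
qed

lemma rank_card_col:
  fixes A :: "bit mat"
  assumes A: "A \<in> carrier_mat m k"
  shows "card ((\<lambda>x. A *\<^sub>v x) ` carrier_vec k) = 2 ^ rank2 A"
proof -
  interpret vec_space "TYPE(bit)" m .
  have li0: "\<not> lin_dep {}" by (rule finite_lin_indpt2) auto
  obtain S where finS: "finite S" and maxS: "maximal S (\<lambda>T. T \<subseteq> set (cols A) \<and> \<not> lin_dep T)"
    using maximal_exists_superset[of "set (cols A)" "\<lambda>T. T \<subseteq> set (cols A) \<and> \<not> lin_dep T" "{}"] li0 by auto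
  have r: "rank2 A = card S" unfolding rank2_def using rank_card_indpt[OF A maxS] A by auto
  have SU: "S \<subseteq> set (cols A)" "\<not> lin_dep S" using maxS unfolding maximal_def by auto
  have colsC: "set (cols A) \<subseteq> carrier_vec m" using A cols_dim by blast
  have SC: "S \<subseteq> carrier_vec m" using SU colsC by auto
  have "set (cols A) \<subseteq> span S"
  proof
    fix c assume c: "c \<in> set (cols A)"
    show "c \<in> span S"
    proof (cases "c \<in> S")
      case True then show ?thesis using in_own_span[OF SC] by auto
    next
      case False
      have "lin_dep (S \<union> {c})"
      proof (rule ccontr)
        assume "\<not> lin_dep (S \<union> {c})"
        then have "S \<union> {c} = S" using maxS c unfolding maximal_def by blast
        then show False using False by auto
      qed
      then show ?thesis using lin_dep_iff_in_span[OF SC SU(2) _ False] c colsC by auto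
    qed
  qed
  then have "span (set (cols A)) \<subseteq> span S"
    by (rule span_is_subset[OF _ span_is_submodule[OF SC]])
  moreover have "span S \<subseteq> span (set (cols A))" by (rule span_is_monotone[OF SU(1)])
  ultimately have eq: "span S = col_space A" unfolding col_space_def by auto
  have "col_space A = (\<lambda>x. A *\<^sub>v x) ` carrier_vec k"
    unfolding col_space_eq[OF A] using A by auto
  then have "card ((\<lambda>x. A *\<^sub>v x) ` carrier_vec k) = card (span S)" using eq by simp
  also have "\<dots> = 2 ^ card S" by (rule card_span_bit[OF finS SC SU(2)])
  finally show ?thesis using r by simp
qed




lemma vadd_cancel1: "(a::bit vec) \<in> carrier_vec n \<Longrightarrow> c \<in> carrier_vec n \<Longrightarrow> a + (a + c) = c"
  by (intro eq_vecI) (auto simp: add.assoc[symmetric])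

lemma vadd_cancel2: "(w::bit vec) \<in> carrier_vec n \<Longrightarrow> v \<in> carrier_vec n \<Longrightarrow> (w + v) + v = w"
  by (intro eq_vecI) (auto simp: add.assoc)

lemma hwt_append: "hwt (a @\<^sub>v b) = hwt a + hwt b"
proof -
  let ?A = "{i. i < dim_vec a \<and> a $ i \<noteq> 0}" and ?B = "{i. i < dim_vec b \<and> b $ i \<noteq> 0}"
  have L1: "{i. i < dim_vec (a @\<^sub>v b) \<and> (a @\<^sub>v b) $ i \<noteq> 0} \<subseteq> ?A \<union> (\<lambda>i. dim_vec a + i) ` ?B"
  proof
    fix i assume i: "i \<in> {i. i < dim_vec (a @\<^sub>v b) \<and> (a @\<^sub>v b) $ i \<noteq> 0}"
    show "i \<in> ?A \<union> (\<lambda>i. dim_vec a + i) ` ?B"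
    proof (cases "i < dim_vec a")
      case True then show ?thesis using i by auto
    next
      case False
      have e: "i = dim_vec a + (i - dim_vec a)" using False by auto
      have "i - dim_vec a \<in> ?B" using False i by auto
      then show ?thesis using e by blast
    qed
  qed
  have L2: "?A \<union> (\<lambda>i. dim_vec a + i) ` ?B \<subseteq> {i. i < dim_vec (a @\<^sub>v b) \<and> (a @\<^sub>v b) $ i \<noteq> 0}"
    by auto
  have "{i. i < dim_vec (a @\<^sub>v b) \<and> (a @\<^sub>v b) $ i \<noteq> 0} = ?A \<union> (\<lambda>i. dim_vec a + i) ` ?B"
    using L1 L2 by (rule equalityI)
  moreover have "card (?A \<union> (\<lambda>i. dim_vec a + i) ` ?B) = card ?A + card ?B"
    by (subst card_Un_disjoint) (auto simp: card_image)
  ultimately show ?thesis unfolding hwt_def by simp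
qed

lemma hwt_add: assumes "dim_vec a = dim_vec c"
  shows "hwt (a + c) + 2 * hwt (vwedge a c) = hwt a + hwt (c :: bit vec)"
proof -
  let ?A = "{i. i < dim_vec a \<and> a $ i \<noteq> 0}" and ?C = "{i. i < dim_vec c \<and> c $ i \<noteq> 0}"
  have fA: "finite ?A" "finite ?C" by auto
  have s: "{i. i < dim_vec (a + c) \<and> (a + c) $ i \<noteq> 0} = (?A - ?C) \<union> (?C - ?A)"
    using assms by (auto simp: bit_add_eq0)
  have w: "{i. i < dim_vec (vwedge a c) \<and> vwedge a c $ i \<noteq> 0} = ?A \<inter> ?C"
    using assms by (auto simp: vwedge_def)
  have c1: "card ?A = card (?A - ?C) + card (?A \<inter> ?C)"
  proof -
    have "?A = (?A - ?C) \<union> (?A \<inter> ?C)" by blast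
    then have "card ?A = card ((?A - ?C) \<union> (?A \<inter> ?C))" by simp
    also have "\<dots> = card (?A - ?C) + card (?A \<inter> ?C)" by (rule card_Un_disjoint) auto
    finally show ?thesis .
  qed
  have c2: "card ?C = card (?C - ?A) + card (?A \<inter> ?C)"
  proof -
    have "?C = (?C - ?A) \<union> (?A \<inter> ?C)" by blast
    then have "card ?C = card ((?C - ?A) \<union> (?A \<inter> ?C))" by simp
    also have "\<dots> = card (?C - ?A) + card (?A \<inter> ?C)" by (rule card_Un_disjoint) auto
    finally show ?thesis .
  qed
  have c3: "card ((?A - ?C) \<union> (?C - ?A)) = card (?A - ?C) + card (?C - ?A)"
    by (rule card_Un_disjoint) auto
  show ?thesis unfolding hwt_def s w using c1 c2 c3 by simp
qed




lemma zero_mat_mult_vec[simp]: "v \<in> carrier_vec nc \<Longrightarrow> 0\<^sub>m nr nc *\<^sub>v v = (0\<^sub>v nr :: 'a :: semiring_0 vec)"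
  by (intro eq_vecI) (auto simp: scalar_prod_def)

lemma rs_eq: assumes H: "(H :: bit mat) \<in> carrier_mat r n"
  shows "rs H = {w \<in> carrier_vec n. \<exists>y\<in>carrier_vec r. H\<^sup>T *\<^sub>v y = w}"
proof -
  interpret vec_space "TYPE(bit)" n .
  show ?thesis unfolding rs_def using row_space_eq[OF H] H by auto
qed

lemma ker_eq: assumes H: "(H :: bit mat) \<in> carrier_mat r n"
  shows "ker H = {v \<in> carrier_vec n. H *\<^sub>v v = 0\<^sub>v r}"
  unfolding ker_def using mat_kernel[OF H] by auto

locale cssq =
  fixes HX HZ :: "bit mat" and n rX rZ :: nat
  assumes HX: "HX \<in> carrier_mat rX n"
    and HZ: "HZ \<in> carrier_mat rZ n"
    and css: "HX * HZ\<^sup>T = 0\<^sub>m rX rZ"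
begin

abbreviation "HXp \<equiv> four_block_mat HX HX (0\<^sub>m rZ n) HZ"
abbreviation "HZp \<equiv> four_block_mat HZ (0\<^sub>m rZ n) HX HX"

lemma HXp_car: "HXp \<in> carrier_mat (rX + rZ) (n + n)" using HX HZ by auto
lemma HZp_car: "HZp \<in> carrier_mat (rZ + rX) (n + n)" using HX HZ by auto

lemma mvX': assumes a: "a \<in> carrier_vec n" and b: "b \<in> carrier_vec n"
  shows "HXp *\<^sub>v (a @\<^sub>v b) = (HX *\<^sub>v (a + b)) @\<^sub>v (HZ *\<^sub>v b)"
  using four_block_mat_mult_vec[OF HX HX _ HZ a b] HX HZ a b
  by (simp add: mult_add_distrib_mat_vec)

lemma mvZ': assumes a: "a \<in> carrier_vec n" and b: "b \<in> carrier_vec n"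
  shows "HZp *\<^sub>v (a @\<^sub>v b) = (HZ *\<^sub>v a) @\<^sub>v (HX *\<^sub>v (a + b))"
  using four_block_mat_mult_vec[OF HZ _ HX HX a b] HX HZ a b
  by (simp add: mult_add_distrib_mat_vec)

lemma tX': "HXp\<^sup>T = four_block_mat HX\<^sup>T (0\<^sub>m n rZ) HX\<^sup>T HZ\<^sup>T"
  using transpose_four_block_mat[OF HX HX _ HZ] by simp

lemma tZ': "HZp\<^sup>T = four_block_mat HZ\<^sup>T HX\<^sup>T (0\<^sub>m n rZ) HX\<^sup>T"
  using transpose_four_block_mat[OF HZ _ HX HX] by simp

lemma tvX': assumes u: "u \<in> carrier_vec rX" and w: "w \<in> carrier_vec rZ"
  shows "HXp\<^sup>T *\<^sub>v (u @\<^sub>v w) = (HX\<^sup>T *\<^sub>v u) @\<^sub>v (HX\<^sup>T *\<^sub>v u + HZ\<^sup>T *\<^sub>v w)"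
  unfolding tX' using four_block_mat_mult_vec[of "HX\<^sup>T" n rX "0\<^sub>m n rZ" rZ "HX\<^sup>T" n "HZ\<^sup>T" u w] HX HZ u w
  by simp

lemma tvZ': assumes u: "u \<in> carrier_vec rZ" and w: "w \<in> carrier_vec rX"
  shows "HZp\<^sup>T *\<^sub>v (u @\<^sub>v w) = (HZ\<^sup>T *\<^sub>v u + HX\<^sup>T *\<^sub>v w) @\<^sub>v (HX\<^sup>T *\<^sub>v w)"
  unfolding tZ' using four_block_mat_mult_vec[of "HZ\<^sup>T" n rZ "HX\<^sup>T" rX "0\<^sub>m n rZ" n "HX\<^sup>T" u w] HX HZ u w
  by simp

end



lemma vadd_cancel3: "(a::bit vec) \<in> carrier_vec n \<Longrightarrow> b \<in> carrier_vec n \<Longrightarrow> b + (a + b) = a"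
  by (intro eq_vecI) (auto simp: add.assoc[symmetric] add.commute)

lemma zero_append_vec: "0\<^sub>v (p + q) = (0\<^sub>v p @\<^sub>v (0\<^sub>v q :: 'a :: zero vec))"
  by (intro eq_vecI) auto

lemma mat_add_self: "(M :: bit mat) \<in> carrier_mat r c \<Longrightarrow> M + M = 0\<^sub>m r c"
  by (intro eq_matI) auto

context cssq begin

lemma cX[simp]: "u \<in> carrier_vec rX \<Longrightarrow> HX\<^sup>T *\<^sub>v u \<in> carrier_vec n"
  using HX by (metis mult_mat_vec_carrier transpose_carrier_mat)
lemma cZ[simp]: "u \<in> carrier_vec rZ \<Longrightarrow> HZ\<^sup>T *\<^sub>v u \<in> carrier_vec n"
  using HZ by (metis mult_mat_vec_carrier transpose_carrier_mat)

lemma kZ': assumes a: "a \<in> carrier_vec n" and b: "b \<in> carrier_vec n"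
  shows "a @\<^sub>v b \<in> ker HZp \<longleftrightarrow> a \<in> ker HZ \<and> a + b \<in> ker HX"
proof -
  have "a @\<^sub>v b \<in> ker HZp \<longleftrightarrow> HZp *\<^sub>v (a @\<^sub>v b) = 0\<^sub>v rZ @\<^sub>v 0\<^sub>v rX"
    unfolding ker_eq[OF HZp_car] zero_append_vec using a b by auto
  also have "\<dots> \<longleftrightarrow> (HZ *\<^sub>v a) @\<^sub>v (HX *\<^sub>v (a + b)) = 0\<^sub>v rZ @\<^sub>v 0\<^sub>v rX"
    by (simp only: mvZ'[OF a b])
  also have "\<dots> \<longleftrightarrow> HZ *\<^sub>v a = 0\<^sub>v rZ \<and> HX *\<^sub>v (a + b) = 0\<^sub>v rX"
    by (rule append_vec_eq[of _ rZ]) (use HZ a in auto)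
  finally show ?thesis unfolding ker_eq[OF HX] ker_eq[OF HZ] using a b by auto
qed

lemma kX': assumes a: "a \<in> carrier_vec n" and b: "b \<in> carrier_vec n"
  shows "a @\<^sub>v b \<in> ker HXp \<longleftrightarrow> a + b \<in> ker HX \<and> b \<in> ker HZ"
proof -
  have "a @\<^sub>v b \<in> ker HXp \<longleftrightarrow> HXp *\<^sub>v (a @\<^sub>v b) = 0\<^sub>v rX @\<^sub>v 0\<^sub>v rZ"
    unfolding ker_eq[OF HXp_car] zero_append_vec using a b by auto
  also have "\<dots> \<longleftrightarrow> (HX *\<^sub>v (a + b)) @\<^sub>v (HZ *\<^sub>v b) = 0\<^sub>v rX @\<^sub>v 0\<^sub>v rZ"
    by (simp only: mvX'[OF a b])
  also have "\<dots> \<longleftrightarrow> HX *\<^sub>v (a + b) = 0\<^sub>v rX \<and> HZ *\<^sub>v b = 0\<^sub>v rZ"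
    by (rule append_vec_eq[of _ rX]) (use HX a b in auto)
  finally show ?thesis unfolding ker_eq[OF HX] ker_eq[OF HZ] using a b by auto
qed

lemma rX': assumes a: "a \<in> carrier_vec n" and b: "b \<in> carrier_vec n"
  shows "a @\<^sub>v b \<in> rs HXp \<longleftrightarrow> a \<in> rs HX \<and> a + b \<in> rs HZ"
proof
  assume "a @\<^sub>v b \<in> rs HXp"
  then obtain y where y: "y \<in> carrier_vec (rX + rZ)" and e: "HXp\<^sup>T *\<^sub>v y = a @\<^sub>v b"
    unfolding rs_eq[OF HXp_car] by auto
  define u where "u = vec_first y rX"
  define w where "w = vec_last y rZ"
  have u: "u \<in> carrier_vec rX" and w: "w \<in> carrier_vec rZ" unfolding u_def w_def by auto
  have yy: "y = u @\<^sub>v w" unfolding u_def w_def using y by simp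
  have "(HX\<^sup>T *\<^sub>v u) @\<^sub>v (HX\<^sup>T *\<^sub>v u + HZ\<^sup>T *\<^sub>v w) = a @\<^sub>v b"
    using e unfolding yy tvX'[OF u w] .
  then have e1: "HX\<^sup>T *\<^sub>v u = a" and e2: "HX\<^sup>T *\<^sub>v u + HZ\<^sup>T *\<^sub>v w = b"
    using append_vec_eq[of "HX\<^sup>T *\<^sub>v u" n a] u a by auto
  have "a + b = HZ\<^sup>T *\<^sub>v w" using e1 e2 vadd_cancel1[of a n "HZ\<^sup>T *\<^sub>v w"] HZ a w by auto
  then show "a \<in> rs HX \<and> a + b \<in> rs HZ"
    unfolding rs_eq[OF HX] rs_eq[OF HZ] using e1 u w a b by auto
next
  assume "a \<in> rs HX \<and> a + b \<in> rs HZ"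
  then obtain u w where u: "u \<in> carrier_vec rX" and w: "w \<in> carrier_vec rZ"
    and e1: "HX\<^sup>T *\<^sub>v u = a" and e2: "HZ\<^sup>T *\<^sub>v w = a + b"
    unfolding rs_eq[OF HX] rs_eq[OF HZ] by auto
  have "HXp\<^sup>T *\<^sub>v (u @\<^sub>v w) = a @\<^sub>v b"
    unfolding tvX'[OF u w] e1 e2 using vadd_cancel1[OF a b] by simp
  then show "a @\<^sub>v b \<in> rs HXp" unfolding rs_eq[OF HXp_car] using u w a b by auto
qed

lemma rZ': assumes a: "a \<in> carrier_vec n" and b: "b \<in> carrier_vec n"
  shows "a @\<^sub>v b \<in> rs HZp \<longleftrightarrow> b \<in> rs HX \<and> a + b \<in> rs HZ"
proof
  assume "a @\<^sub>v b \<in> rs HZp"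
  then obtain y where y: "y \<in> carrier_vec (rZ + rX)" and e: "HZp\<^sup>T *\<^sub>v y = a @\<^sub>v b"
    unfolding rs_eq[OF HZp_car] by auto
  define u where "u = vec_first y rZ"
  define w where "w = vec_last y rX"
  have u: "u \<in> carrier_vec rZ" and w: "w \<in> carrier_vec rX" unfolding u_def w_def by auto
  have yy: "y = u @\<^sub>v w" unfolding u_def w_def using y by simp
  have "(HZ\<^sup>T *\<^sub>v u + HX\<^sup>T *\<^sub>v w) @\<^sub>v (HX\<^sup>T *\<^sub>v w) = a @\<^sub>v b"
    using e unfolding yy tvZ'[OF u w] .
  then have e1: "HZ\<^sup>T *\<^sub>v u + HX\<^sup>T *\<^sub>v w = a" and e2: "HX\<^sup>T *\<^sub>v w = b"
    using append_vec_eq[of "HZ\<^sup>T *\<^sub>v u + HX\<^sup>T *\<^sub>v w" n a] a u w by auto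
  have "a + b = HZ\<^sup>T *\<^sub>v u" using e1 e2 vadd_cancel2[of "HZ\<^sup>T *\<^sub>v u" n b] HZ b u by auto
  then show "b \<in> rs HX \<and> a + b \<in> rs HZ"
    unfolding rs_eq[OF HX] rs_eq[OF HZ] using e2 u w a b by auto
next
  assume "b \<in> rs HX \<and> a + b \<in> rs HZ"
  then obtain u w where u: "u \<in> carrier_vec rZ" and w: "w \<in> carrier_vec rX"
    and e2: "HX\<^sup>T *\<^sub>v w = b" and e1: "HZ\<^sup>T *\<^sub>v u = a + b"
    unfolding rs_eq[OF HX] rs_eq[OF HZ] by auto
  have "HZp\<^sup>T *\<^sub>v (u @\<^sub>v w) = a @\<^sub>v b"
    unfolding tvZ'[OF u w] e1 e2 using vadd_cancel2[OF a b] by simp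
  then show "a @\<^sub>v b \<in> rs HZp" unfolding rs_eq[OF HZp_car] using u w a b by auto
qed

end



context cssq begin

definition "PP = {(l, c). l \<in> ker HZ \<and> c \<in> ker HX \<and> \<not> (l \<in> rs HX \<and> c \<in> rs HZ)}"

lemma kerZ_car: "v \<in> ker HZ \<Longrightarrow> v \<in> carrier_vec n" unfolding ker_eq[OF HZ] by auto
lemma kerX_car: "v \<in> ker HX \<Longrightarrow> v \<in> carrier_vec n" unfolding ker_eq[OF HX] by auto

lemma SX: "ker HZp - rs HXp = (\<lambda>(l, c). l @\<^sub>v (l + c)) ` PP"
proof (intro equalityI subsetI)
  fix v assume v: "v \<in> ker HZp - rs HXp"
  then have vc: "v \<in> carrier_vec (n + n)" unfolding ker_eq[OF HZp_car] by auto
  define a where "a = vec_first v n"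
  define b where "b = vec_last v n"
  have a: "a \<in> carrier_vec n" and b: "b \<in> carrier_vec n" unfolding a_def b_def by auto
  have vv: "v = a @\<^sub>v b" unfolding a_def b_def using vc by simp
  have "(a, a + b) \<in> PP" using v kZ'[OF a b] rX'[OF a b] unfolding vv PP_def by auto
  moreover have "v = a @\<^sub>v (a + (a + b))" using vv vadd_cancel1[OF a b] by simp
  ultimately show "v \<in> (\<lambda>(l, c). l @\<^sub>v (l + c)) ` PP" by force
next
  fix v assume "v \<in> (\<lambda>(l, c). l @\<^sub>v (l + c)) ` PP"
  then obtain l c where p: "(l, c) \<in> PP" and v: "v = l @\<^sub>v (l + c)" by auto
  have l: "l \<in> carrier_vec n" and c: "c \<in> carrier_vec n"
    using p kerZ_car kerX_car unfolding PP_def by auto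
  have lc: "l + c \<in> carrier_vec n" using l c by auto
  show "v \<in> ker HZp - rs HXp"
    using p kZ'[OF l lc] rX'[OF l lc] vadd_cancel1[OF l c] unfolding v PP_def by auto
qed

lemma SZ: "ker HXp - rs HZp = (\<lambda>(l, c). (l + c) @\<^sub>v l) ` PP"
proof (intro equalityI subsetI)
  fix v assume v: "v \<in> ker HXp - rs HZp"
  then have vc: "v \<in> carrier_vec (n + n)" unfolding ker_eq[OF HXp_car] by auto
  define a where "a = vec_first v n"
  define b where "b = vec_last v n"
  have a: "a \<in> carrier_vec n" and b: "b \<in> carrier_vec n" unfolding a_def b_def by auto
  have vv: "v = a @\<^sub>v b" unfolding a_def b_def using vc by simp
  have "(b, a + b) \<in> PP" using v kX'[OF a b] rZ'[OF a b] unfolding vv PP_def by auto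
  moreover have "v = (b + (a + b)) @\<^sub>v b" using vv vadd_cancel3[OF a b] by simp
  ultimately show "v \<in> (\<lambda>(l, c). (l + c) @\<^sub>v l) ` PP" by force
next
  fix v assume "v \<in> (\<lambda>(l, c). (l + c) @\<^sub>v l) ` PP"
  then obtain l c where p: "(l, c) \<in> PP" and v: "v = (l + c) @\<^sub>v l" by auto
  have l: "l \<in> carrier_vec n" and c: "c \<in> carrier_vec n"
    using p kerZ_car kerX_car unfolding PP_def by auto
  have lc: "l + c \<in> carrier_vec n" using l c by auto
  have e: "(l + c) + l = c" using l c by (intro eq_vecI) (auto simp: add.commute add.left_commute)
  show "v \<in> ker HXp - rs HZp"
    using p kX'[OF lc l] rZ'[OF lc l] e unfolding v PP_def by auto
qed

definition "FF = (\<lambda>(l, c). enat (hwt l + hwt (l + c)))"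

lemma dX'_eq: "css_dX HXp HZp = Inf (FF ` PP)"
proof -
  have "css_dX HXp HZp = Inf ((\<lambda>v. enat (hwt v)) ` ((\<lambda>(l, c). l @\<^sub>v (l + c)) ` PP))"
    unfolding css_dX_def SX ..
  also have "(\<lambda>v. enat (hwt v)) ` ((\<lambda>(l, c). l @\<^sub>v (l + c)) ` PP) = FF ` PP"
    unfolding image_image FF_def by (intro image_cong refl) (auto simp: hwt_append)
  finally show ?thesis .
qed

lemma dZ'_eq: "css_dZ HXp HZp = Inf (FF ` PP)"
proof -
  have "css_dZ HXp HZp = Inf ((\<lambda>v. enat (hwt v)) ` ((\<lambda>(l, c). (l + c) @\<^sub>v l) ` PP))"
    unfolding css_dZ_def SZ ..
  also have "(\<lambda>v. enat (hwt v)) ` ((\<lambda>(l, c). (l + c) @\<^sub>v l) ` PP) = FF ` PP"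
    unfolding image_image FF_def by (intro image_cong refl) (auto simp: hwt_append)
  finally show ?thesis .
qed

lemma T_eq: assumes l: "l \<in> carrier_vec n" and g: "g \<in> carrier_vec n"
  shows "2 * hwt l + hwt g - 2 * hwt (vwedge l g) = hwt l + hwt (l + g)"
  using hwt_add[of l g] l g by auto

lemma Inf_FF: "Inf (FF ` PP) = min (css_dZ HX HZ)
               (Inf {enat (2 * hwt l + hwt g - 2 * hwt (vwedge l g)) | l g.
                       l \<in> ker HZ - rs HX \<and> g \<in> ker HX})" (is "_ = min ?A (Inf ?T)")
proof (rule antisym)
  have "Inf (FF ` PP) \<le> ?A" unfolding css_dZ_def
  proof (rule Inf_greatest)
    fix x assume "x \<in> (\<lambda>v. enat (hwt v)) ` (ker HX - rs HZ)"
    then obtain v where v: "v \<in> ker HX - rs HZ" and x: "x = enat (hwt v)" by auto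
    have vc: "v \<in> carrier_vec n" using v kerX_car by auto
    have z: "0\<^sub>v n \<in> ker HZ" unfolding ker_eq[OF HZ] using HZ by auto
    have "(0\<^sub>v n, v) \<in> PP" using v z unfolding PP_def by auto
    moreover have "FF (0\<^sub>v n, v) = x" unfolding FF_def x using vc by (simp add: hwt_def)
    ultimately show "Inf (FF ` PP) \<le> x" by (metis Inf_lower image_eqI)
  qed
  moreover have "Inf (FF ` PP) \<le> Inf ?T"
  proof (rule Inf_greatest)
    fix x assume "x \<in> ?T"
    then obtain l g where lg: "l \<in> ker HZ - rs HX" "g \<in> ker HX"
      and x: "x = enat (2 * hwt l + hwt g - 2 * hwt (vwedge l g))" by auto
    have "(l, g) \<in> PP" using lg unfolding PP_def by auto
    moreover have "FF (l, g) = x" unfolding FF_def x using T_eq lg kerZ_car kerX_car by auto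
    ultimately show "Inf (FF ` PP) \<le> x" by (metis Inf_lower image_eqI)
  qed
  ultimately show "Inf (FF ` PP) \<le> min ?A (Inf ?T)" by simp
next
  show "min ?A (Inf ?T) \<le> Inf (FF ` PP)"
  proof (rule Inf_greatest)
    fix x assume "x \<in> FF ` PP"
    then obtain l c where p: "(l, c) \<in> PP" and x: "x = FF (l, c)" by auto
    have l: "l \<in> carrier_vec n" and c: "c \<in> carrier_vec n"
      using p kerZ_car kerX_car unfolding PP_def by auto
    show "min ?A (Inf ?T) \<le> x"
    proof (cases "l \<in> rs HX")
      case False
      have "x = enat (2 * hwt l + hwt c - 2 * hwt (vwedge l c))" using T_eq[OF l c] unfolding x FF_def by simp
      moreover have "l \<in> ker HZ - rs HX" "c \<in> ker HX" using p False unfolding PP_def by auto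
      ultimately have "x \<in> ?T" by blast
      then have "Inf ?T \<le> x" by (rule Inf_lower)
      then show ?thesis by (simp add: min.coboundedI2)
    next
      case True
      then have cm: "c \<in> ker HX - rs HZ" using p unfolding PP_def by auto
      then have "?A \<le> enat (hwt c)" unfolding css_dZ_def by (intro Inf_lower) auto
      moreover have "hwt c \<le> hwt l + hwt (l + c)"
        using hwt_add[of l "l + c"] vadd_cancel1[OF l c] l c by auto
      ultimately have "?A \<le> x" unfolding x FF_def by (simp add: order_trans)
      then show ?thesis by (simp add: min.coboundedI1)
    qed
  qed
qed

end



context cssq begin

lemma prod0: "HXp * HZp\<^sup>T = 0\<^sub>m (rX + rZ) (rZ + rX)"
proof -
  have zt: "HZ * HX\<^sup>T = 0\<^sub>m rZ rX"
  proof -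
    have "(HX * HZ\<^sup>T)\<^sup>T = HZ * HX\<^sup>T"
      using transpose_mult[of HX rX n "HZ\<^sup>T" rZ] HX HZ by simp
    then show ?thesis using css by simp
  qed
  have xx: "HX * HX\<^sup>T + HX * HX\<^sup>T = 0\<^sub>m rX rX"
    by (rule mat_add_self) (use HX in auto)
  have "HXp * HZp\<^sup>T = four_block_mat (HX * HZ\<^sup>T + HX * 0\<^sub>m n rZ) (HX * HX\<^sup>T + HX * HX\<^sup>T)
      (0\<^sub>m rZ n * HZ\<^sup>T + HZ * 0\<^sub>m n rZ) (0\<^sub>m rZ n * HX\<^sup>T + HZ * HX\<^sup>T)"
    unfolding tZ' by (rule mult_four_block_mat) (use HX HZ in auto)
  also have "\<dots> = four_block_mat (0\<^sub>m rX rZ) (0\<^sub>m rX rX) (0\<^sub>m rZ rZ) (0\<^sub>m rZ rX)"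
    using HX HZ css zt xx by simp
  finally show ?thesis by simp
qed

lemma colX': "(\<lambda>x. HXp *\<^sub>v x) ` carrier_vec (n + n) =
  (\<lambda>(y, z). y @\<^sub>v z) ` ((\<lambda>x. HX *\<^sub>v x) ` carrier_vec n \<times> (\<lambda>x. HZ *\<^sub>v x) ` carrier_vec n)"
proof (intro equalityI subsetI)
  fix v assume "v \<in> (\<lambda>x. HXp *\<^sub>v x) ` carrier_vec (n + n)"
  then obtain x where x: "x \<in> carrier_vec (n + n)" and v: "v = HXp *\<^sub>v x" by auto
  define a where "a = vec_first x n"
  define b where "b = vec_last x n"
  have a: "a \<in> carrier_vec n" and b: "b \<in> carrier_vec n" unfolding a_def b_def by auto
  have xx: "x = a @\<^sub>v b" unfolding a_def b_def using x by simp
  have "v = (HX *\<^sub>v (a + b)) @\<^sub>v (HZ *\<^sub>v b)" unfolding v xx mvX'[OF a b] ..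
  moreover have "a + b \<in> carrier_vec n" using a b by auto
  ultimately show "v \<in> (\<lambda>(y, z). y @\<^sub>v z) ` ((\<lambda>x. HX *\<^sub>v x) ` carrier_vec n \<times> (\<lambda>x. HZ *\<^sub>v x) ` carrier_vec n)"
    using b by blast
next
  fix v assume "v \<in> (\<lambda>(y, z). y @\<^sub>v z) ` ((\<lambda>x. HX *\<^sub>v x) ` carrier_vec n \<times> (\<lambda>x. HZ *\<^sub>v x) ` carrier_vec n)"
  then obtain w u where w: "w \<in> carrier_vec n" and u: "u \<in> carrier_vec n"
    and v: "v = (HX *\<^sub>v w) @\<^sub>v (HZ *\<^sub>v u)" by auto
  have wu: "w + u \<in> carrier_vec n" using w u by auto
  have "HXp *\<^sub>v ((w + u) @\<^sub>v u) = v" unfolding mvX'[OF wu u] vadd_cancel2[OF w u] v ..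
  moreover have "(w + u) @\<^sub>v u \<in> carrier_vec (n + n)" using wu u by auto
  ultimately show "v \<in> (\<lambda>x. HXp *\<^sub>v x) ` carrier_vec (n + n)" by blast
qed

lemma colZ': "(\<lambda>x. HZp *\<^sub>v x) ` carrier_vec (n + n) =
  (\<lambda>(y, z). y @\<^sub>v z) ` ((\<lambda>x. HZ *\<^sub>v x) ` carrier_vec n \<times> (\<lambda>x. HX *\<^sub>v x) ` carrier_vec n)"
proof (intro equalityI subsetI)
  fix v assume "v \<in> (\<lambda>x. HZp *\<^sub>v x) ` carrier_vec (n + n)"
  then obtain x where x: "x \<in> carrier_vec (n + n)" and v: "v = HZp *\<^sub>v x" by auto
  define a where "a = vec_first x n"
  define b where "b = vec_last x n"
  have a: "a \<in> carrier_vec n" and b: "b \<in> carrier_vec n" unfolding a_def b_def by auto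
  have xx: "x = a @\<^sub>v b" unfolding a_def b_def using x by simp
  have "v = (HZ *\<^sub>v a) @\<^sub>v (HX *\<^sub>v (a + b))" unfolding v xx mvZ'[OF a b] ..
  moreover have "a + b \<in> carrier_vec n" using a b by auto
  ultimately show "v \<in> (\<lambda>(y, z). y @\<^sub>v z) ` ((\<lambda>x. HZ *\<^sub>v x) ` carrier_vec n \<times> (\<lambda>x. HX *\<^sub>v x) ` carrier_vec n)"
    using a by blast
next
  fix v assume "v \<in> (\<lambda>(y, z). y @\<^sub>v z) ` ((\<lambda>x. HZ *\<^sub>v x) ` carrier_vec n \<times> (\<lambda>x. HX *\<^sub>v x) ` carrier_vec n)"
  then obtain w u where w: "w \<in> carrier_vec n" and u: "u \<in> carrier_vec n"
    and v: "v = (HZ *\<^sub>v w) @\<^sub>v (HX *\<^sub>v u)" by auto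
  have wu: "w + u \<in> carrier_vec n" using w u by auto
  have "HZp *\<^sub>v (w @\<^sub>v (w + u)) = v" unfolding mvZ'[OF w wu] vadd_cancel1[OF w u] v ..
  moreover have "w @\<^sub>v (w + u) \<in> carrier_vec (n + n)" using wu w by auto
  ultimately show "v \<in> (\<lambda>x. HZp *\<^sub>v x) ` carrier_vec (n + n)" by blast
qed

lemma card_app: assumes "Y \<subseteq> carrier_vec p"
  shows "card ((\<lambda>(y, z). y @\<^sub>v z) ` (Y \<times> Z)) = card Y * card (Z :: bit vec set)"
proof -
  have "inj_on (\<lambda>(y, z). y @\<^sub>v z) (Y \<times> Z)"
  proof (rule inj_onI, clarify)
    fix x y xa ya assume "x \<in> Y" "xa \<in> Y" and e: "x @\<^sub>v y = xa @\<^sub>v ya"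
    then have "x \<in> carrier_vec p" "xa \<in> carrier_vec p" using assms by auto
    then show "x = xa \<and> y = ya" using append_vec_eq[of x p xa y ya] e by auto
  qed
  then show ?thesis by (simp add: card_image card_cartesian_product)
qed

lemma rank_split: 
  assumes M: "M \<in> carrier_mat (r1 + r2) (n + n)" and A: "A \<in> carrier_mat r1 n" and B: "B \<in> carrier_mat r2 n"
  and e: "(\<lambda>x. M *\<^sub>v x) ` carrier_vec (n + n) =
  (\<lambda>(y, z). y @\<^sub>v z) ` ((\<lambda>x. A *\<^sub>v x) ` carrier_vec n \<times> (\<lambda>x. B *\<^sub>v x) ` carrier_vec n)"
  shows "rank2 M = rank2 A + rank2 (B :: bit mat)"
proof -
  have "(2::nat) ^ rank2 M = card ((\<lambda>x. M *\<^sub>v x) ` carrier_vec (n + n))"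
    using rank_card_col[OF M] by simp
  also have "\<dots> = card ((\<lambda>x. A *\<^sub>v x) ` carrier_vec n) * card ((\<lambda>x. B *\<^sub>v x) ` carrier_vec n)"
    unfolding e by (rule card_app[of _ r1]) (use A in auto)
  also have "\<dots> = 2 ^ (rank2 A + rank2 B)"
    using rank_card_col[OF A] rank_card_col[OF B] by (simp add: power_add)
  finally show ?thesis by simp
qed

lemma k': "css_k HXp HZp = 2 * css_k HX HZ"
proof -
  have "rank2 HXp = rank2 HX + rank2 HZ" by (rule rank_split[OF HXp_car HX HZ colX'])
  moreover have "rank2 HZp = rank2 HZ + rank2 HX" by (rule rank_split[OF HZp_car HZ HX colZ'])
  moreover have "dim_col HXp = n + n" "dim_col HX = n" using HX HZ by auto
  ultimately show ?thesis unfolding css_k_def by simp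
qed

end

theorem mainTheorem17:
  fixes HX HZ :: "bit mat" and n rX rZ :: nat
  assumes HX: "HX \<in> carrier_mat rX n"
    and HZ: "HZ \<in> carrier_mat rZ n"
    and css: "HX * HZ\<^sup>T = 0\<^sub>m rX rZ"
  defines "HX' \<equiv> four_block_mat HX HX (0\<^sub>m rZ n) HZ"
    and "HZ' \<equiv> four_block_mat HZ (0\<^sub>m rZ n) HX HX"
    and "d' \<equiv> min (css_dZ HX HZ)
               (Inf {enat (2 * hwt l + hwt g - 2 * hwt (vwedge l g)) | l g.
                       l \<in> ker HZ - rs HX \<and> g \<in> ker HX})"
  shows "HX' * HZ'\<^sup>T = 0\<^sub>m (rX + rZ) (rZ + rX)
    \<and> css_k HX' HZ' = 2 * css_k HX HZ
    \<and> css_dX HX' HZ' = d'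
    \<and> css_dZ HX' HZ' = d'"
proof -
  interpret cssq HX HZ n rX rZ using HX HZ css by unfold_locales
  show ?thesis unfolding HX'_def HZ'_def d'_def
    using prod0 k' dX'_eq dZ'_eq Inf_FF by simp
qed

end
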